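(* Let $S$ ($n\times n$, invertible), $U$ ($m\times n$), $V$ ($n\times m$) be complex matrices and $K$ an $n\times n$ matrix solving $S^{-1}K-KS=VU$. Then, with $\Xi=S^xe^{-t(S-S^{-1})}$ ($x\in\mathbb{Z}$, $t\in\mathbb{R}$), $$\mathcal{V}=-U\big(I+(\Xi K)^2\big)^{-1}\Xi V$$ (wherever the inverse exists) solves the $m\times m$ matrix semi-discrete modified KdV equation $\dot{\mathcal{V}}+\mathcal{V}^+(I+\mathcal{V}^2)-(I+\mathcal{V}^2)\mathcal{V}^-=0$.
   Context: $\mathcal{V}^\pm(x,t)=\mathcal{V}(x\pm1,t)$, $\dot{\mathcal{V}}=\partial_t\mathcal{V}$, $I=I_m$ in the equation and $I=I_n$ in the formula for $\mathcal{V}$. *)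

theory Defs
  imports "HOL-Analysis.Analysis"
begin

primrec mat_pow :: "'a::comm_ring_1 ^'n^'n \<Rightarrow> nat \<Rightarrow> 'a^'n^'n" where
  "mat_pow A 0 = mat 1"
| "mat_pow A (Suc k) = A ** mat_pow A k"

definition mat_zpow :: "'a::field ^'n^'n \<Rightarrow> int \<Rightarrow> 'a^'n^'n" where
  "mat_zpow A x = (if 0 \<le> x then mat_pow A (nat x) else mat_pow (matrix_inv A) (nat (- x)))"

definition mat_exp :: "complex^'n^'n \<Rightarrow> complex^'n^'n" where
  "mat_exp A = (\<Sum>k. (1 / fact k) *\<^sub>R mat_pow A k)"

definition Xi :: "complex^'n^'n \<Rightarrow> int \<Rightarrow> real \<Rightarrow> complex^'n^'n" where
  "Xi S x t = mat_zpow S x ** mat_exp ((- t) *\<^sub>R (S - matrix_inv S))"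

definition calV :: "complex^'n^'n \<Rightarrow> complex^'n^'m \<Rightarrow> complex^'m^'n \<Rightarrow> complex^'n^'n
    \<Rightarrow> int \<Rightarrow> real \<Rightarrow> complex^'m^'m" where
  "calV S U V K x t = - (U ** matrix_inv (mat 1 + (Xi S x t ** K) ** (Xi S x t ** K)) ** Xi S x t ** V)"

end

theory Submission
  imports Defs
begin


lemma mm_scaleR_left: "((r::real) *\<^sub>R A) ** (B::complex^'p^'n) = r *\<^sub>R (A ** B)"
  for A :: "complex^'n^'m"
  by (simp add: vec_eq_iff matrix_matrix_mult_def scaleR_sum_right)

lemma mm_scaleR_right: "A ** ((r::real) *\<^sub>R (B::complex^'p^'n)) = r *\<^sub>R (A ** B)"
  for A :: "complex^'n^'m"
  by (simp add: vec_eq_iff matrix_matrix_mult_def scaleR_sum_right)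

lemma mm_add_rdistrib: "(A + B) ** (C::complex^'p^'n) = A ** C + B ** C"
  for A B :: "complex^'n^'m"
  by (simp add: vec_eq_iff matrix_matrix_mult_def sum.distrib algebra_simps)

lemma mm_diff_rdistrib: "(A - B) ** (C::complex^'p^'n) = A ** C - B ** C"
  for A B :: "complex^'n^'m"
  by (simp add: vec_eq_iff matrix_matrix_mult_def sum_subtractf algebra_simps)

lemma mm_diff_ldistrib: "C ** (A - B) = C ** A - C ** (B::complex^'p^'n)"
  for C :: "complex^'n^'m"
  by (simp add: vec_eq_iff matrix_matrix_mult_def sum_subtractf algebra_simps)

lemma mm_neg_left: "(- A) ** (C::complex^'p^'n) = - (A ** C)"
  for A :: "complex^'n^'m"
  by (simp add: vec_eq_iff matrix_matrix_mult_def sum_negf)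

lemma mm_neg_right: "C ** (- A) = - (C ** (A::complex^'p^'n))"
  for C :: "complex^'n^'m"
  by (simp add: vec_eq_iff matrix_matrix_mult_def sum_negf)

lemma mm_zero_left[simp]: "(0::complex^'n^'m) ** (C::complex^'p^'n) = 0"
  by (simp add: vec_eq_iff matrix_matrix_mult_def)

lemma mm_zero_right[simp]: "(C::complex^'n^'m) ** (0::complex^'p^'n) = 0"
  by (simp add: vec_eq_iff matrix_matrix_mult_def)

lemma mm_bilinear: "bilinear ((**) :: complex^'n^'m \<Rightarrow> complex^'p^'n \<Rightarrow> complex^'p^'m)"
  unfolding bilinear_def
  by (auto intro!: linearI simp: matrix_add_ldistrib mm_add_rdistrib mm_scaleR_left mm_scaleR_right)

lemma mm_bounded_bilinear: "bounded_bilinear ((**) :: complex^'n^'m \<Rightarrow> complex^'p^'n \<Rightarrow> complex^'p^'m)"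
  using mm_bilinear bilinear_conv_bounded_bilinear by blast



lemma mat_pow_scaleR: "mat_pow (r *\<^sub>R (B::complex^'n^'n)) k = (r^k) *\<^sub>R mat_pow B k"
  by (induction k) (simp_all add: mm_scaleR_left mm_scaleR_right)

lemma mat_pow_norm_le:
  assumes K: "\<And>a b. norm ((a::complex^'n^'n) ** (b::complex^'n^'n)) \<le> norm a * norm b * K" and K0: "K \<ge> 0"
  shows "norm (mat_pow (B::complex^'n^'n) k) \<le> norm (mat 1 :: complex^'n^'n) * (K * norm B)^k"
proof (induction k)
  case 0 then show ?case by simp
next
  case (Suc k)
  have "norm (mat_pow B (Suc k)) \<le> norm B * norm (mat_pow B k) * K" using K[of B "mat_pow B k"] by simp
  also have "\<dots> \<le> norm B * (norm (mat 1 :: complex^'n^'n) * (K * norm B)^k) * K"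
    by (intro mult_right_mono mult_left_mono Suc K0) auto
  also have "\<dots> = norm (mat 1 :: complex^'n^'n) * (K * norm B)^Suc k" by (simp add: algebra_simps)
  finally show ?case .
qed

lemma exp_bound_summable: "summable (\<lambda>k. c0 * (a::real)^k / fact k)"
proof -
  have "summable (\<lambda>k. a^k /\<^sub>R fact k)" by (rule summable_exp_generic)
  then have "summable (\<lambda>k. c0 * (a^k /\<^sub>R fact k))" by (rule summable_mult)
  then show ?thesis by (simp add: divide_inverse ac_simps)
qed

definition tm :: "complex^'n^'n \<Rightarrow> nat \<Rightarrow> real \<Rightarrow> complex^'n^'n" where
  "tm B k x = (x^k / fact k) *\<^sub>R mat_pow B k"

lemma mat_exp_tm: "mat_exp (x *\<^sub>R B) = (\<Sum>k. tm B k x)"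
  unfolding mat_exp_def tm_def mat_pow_scaleR by (simp add: divide_inverse_commute)

lemma tm_norm_le:
  assumes K: "\<And>a b. norm ((a::complex^'n^'n) ** (b::complex^'n^'n)) \<le> norm a * norm b * K" and K0: "K \<ge> 0"
    and x: "\<bar>x\<bar> \<le> r"
  shows "norm (tm (B::complex^'n^'n) k x) \<le> norm (mat 1 :: complex^'n^'n) * (r * (K * norm B))^k / fact k"
proof -
  have "norm (tm B k x) = \<bar>x\<bar>^k / fact k * norm (mat_pow B k)"
    by (simp add: tm_def power_abs)
  also have "\<dots> \<le> r^k / fact k * (norm (mat 1 :: complex^'n^'n) * (K * norm B)^k)"
    using x by (intro mult_mono divide_right_mono power_mono mat_pow_norm_le[OF K K0] x) auto
  also have "\<dots> = norm (mat 1 :: complex^'n^'n) * (r * (K * norm B))^k / fact k"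
    by (simp add: power_mult_distrib)
  finally show ?thesis .
qed

lemma tm_summable: "summable (\<lambda>k. tm (B::complex^'n^'n) k x)"
proof -
  obtain K where K: "\<And>a b. norm ((a::complex^'n^'n) ** (b::complex^'n^'n)) \<le> norm a * norm b * K" "K \<ge> 0"
    using bounded_bilinear.nonneg_bounded[OF mm_bounded_bilinear] by blast
  show ?thesis
    by (rule summable_comparison_test[OF _ exp_bound_summable])
       (use tm_norm_le[OF K, of x "\<bar>x\<bar>"] in auto)
qed

lemma deriv_sum_tm:
  "(\<Sum>i<Suc n. (of_nat i * x^(i-1) / fact i) *\<^sub>R mat_pow B i) = B ** (\<Sum>j<n. tm (B::complex^'n^'n) j x)"
proof (induction n)
  case 0 then show ?case by simp
next
  case (Suc n)
  have "(of_nat (Suc n) * x^n / fact (Suc n)) = x^n / fact n"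
    unfolding fact_Suc of_nat_mult by (rule nonzero_mult_divide_mult_cancel_left) simp
  then show ?case using Suc
    by (simp add: matrix_add_ldistrib tm_def mm_scaleR_right)
qed

lemma mat_exp_commute:
  assumes "C ** B = B ** C"
  shows "C ** mat_exp (x *\<^sub>R B) = mat_exp (x *\<^sub>R B) ** (C::complex^'n^'n)"
proof -
  have pc: "C ** mat_pow B k = mat_pow B k ** C" for k
  proof (induction k)
    case (Suc k)
    have "C ** mat_pow B (Suc k) = (C ** B) ** mat_pow B k" by (simp add: matrix_mul_assoc)
    also have "\<dots> = B ** (C ** mat_pow B k)" by (simp only: assms matrix_mul_assoc)
    also have "\<dots> = mat_pow B (Suc k) ** C" by (simp only: Suc matrix_mul_assoc mat_pow.simps)
    finally show ?case .
  qed simp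
  have s: "(\<lambda>k. tm B k x) sums mat_exp (x *\<^sub>R B)"
    using tm_summable mat_exp_tm summable_sums by metis
  have "(\<lambda>k. C ** tm B k x) sums (C ** mat_exp (x *\<^sub>R B))"
    by (rule bounded_linear.sums[OF bounded_bilinear.bounded_linear_right[OF mm_bounded_bilinear] s])
  moreover have "(\<lambda>k. tm B k x ** C) sums (mat_exp (x *\<^sub>R B) ** C)"
    by (rule bounded_linear.sums[OF bounded_bilinear.bounded_linear_left[OF mm_bounded_bilinear] s])
  moreover have "C ** tm B k x = tm B k x ** C" for k
    by (simp add: tm_def mm_scaleR_left mm_scaleR_right pc)
  ultimately show ?thesis using sums_unique2 by fastforce
qed

lemma mat_exp_has_vector_derivative:
  "((\<lambda>s. mat_exp (s *\<^sub>R (B::complex^'n^'n))) has_vector_derivative (B ** mat_exp (t *\<^sub>R B))) (at t)"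
proof -
  obtain K where K: "\<And>a b. norm ((a::complex^'n^'n) ** (b::complex^'n^'n)) \<le> norm a * norm b * K" "K \<ge> 0"
    using bounded_bilinear.nonneg_bounded[OF mm_bounded_bilinear] by blast
  define S where "S = {t - 1 <..< t + 1}"
  define r where "r = \<bar>t\<bar> + 1"
  define c0 where "c0 = norm (mat 1 :: complex^'n^'n)"
  have xr: "\<bar>x\<bar> \<le> r" if "x \<in> S" for x using that by (auto simp: S_def r_def)
  have convS: "convex S" "open S" "t \<in> S" by (auto simp: S_def)
  define f' where "f' = (\<lambda>n (x::real) (h::real). (h * (of_nat n * x^(n-1) / fact n)) *\<^sub>R mat_pow B n)"
  define g' where "g' = (\<lambda>(x::real) (h::real). h *\<^sub>R (B ** mat_exp (x *\<^sub>R B)))"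
  have d1: "((tm B n) has_derivative (f' n x)) (at x within S)" for n x
  proof -
    have "((\<lambda>x. x^n / fact n) has_real_derivative (of_nat n * x^(n-1) / fact n)) (at x within S)"
      by (auto intro!: derivative_eq_intros)
    then have "((\<lambda>x. (x^n / fact n) *\<^sub>R mat_pow B n) has_vector_derivative
        ((of_nat n * x^(n-1) / fact n) *\<^sub>R mat_pow B n)) (at x within S)"
      using has_vector_derivative_scaleR[OF _ has_vector_derivative_const] by fastforce
    then show ?thesis unfolding has_vector_derivative_def f'_def tm_def by simp
  qed
  have unif: "uniform_limit S (\<lambda>n x. \<Sum>i<n. tm B i x) (\<lambda>x. \<Sum>i. tm B i x) sequentially"
    by (rule Weierstrass_m_test[OF tm_norm_le[OF K xr] exp_bound_summable])
  have d3: "\<forall>\<^sub>F n in sequentially. \<forall>x\<in>S. \<forall>h. norm (sum (\<lambda>i. f' i x h) {..<n} - g' x h) \<le> e * norm h"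
    if e: "e > 0" for e
  proof -
    define e' where "e' = e / (norm B * K + 1)"
    have e': "e' > 0" using e K by (simp add: e'_def add_nonneg_pos)
    obtain N where N: "\<And>n x. n \<ge> N \<Longrightarrow> x \<in> S \<Longrightarrow> dist (\<Sum>i<n. tm B i x) (\<Sum>i. tm B i x) < e'"
      using unif[unfolded uniform_limit_sequentially_iff, rule_format, OF e'] by blast
    show ?thesis
      unfolding eventually_sequentially
    proof (intro exI[of _ "Suc N"] allI impI ballI)
      fix n x h assume n: "Suc N \<le> n" and x: "x \<in> S"
      then obtain m where m: "n = Suc m" "m \<ge> N" by (cases n) auto
      have "sum (\<lambda>i. f' i x h) {..<n} = h *\<^sub>R (B ** (\<Sum>j<m. tm B j x))"
      proof -
        have "sum (\<lambda>i. f' i x h) {..<Suc m} = h *\<^sub>R (\<Sum>i<Suc m. (of_nat i * x^(i-1) / fact i) *\<^sub>R mat_pow B i)"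
          unfolding f'_def scaleR_sum_right scaleR_scaleR ..
        then show ?thesis unfolding m deriv_sum_tm .
      qed
      then have "sum (\<lambda>i. f' i x h) {..<n} - g' x h = h *\<^sub>R (B ** ((\<Sum>j<m. tm B j x) - (\<Sum>i. tm B i x)))"
        by (simp add: g'_def mat_exp_tm mm_diff_ldistrib scaleR_diff_right)
      then have "norm (sum (\<lambda>i. f' i x h) {..<n} - g' x h) \<le> \<bar>h\<bar> * (norm B * norm ((\<Sum>j<m. tm B j x) - (\<Sum>i. tm B i x)) * K)"
        using K(1) by (simp add: mult_left_mono)
      also have "\<dots> \<le> \<bar>h\<bar> * (norm B * e' * K)"
        using N[OF m(2) x] K(2) by (intro mult_left_mono mult_right_mono) (auto simp: dist_norm)
      also have "\<dots> \<le> \<bar>h\<bar> * e"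
      proof -
        have "norm B * e' * K = e * (norm B * K / (norm B * K + 1))" by (simp add: e'_def)
        also have "\<dots> \<le> e * 1"
        proof (intro mult_left_mono)
          have "0 \<le> norm B * K" using K(2) by simp
          then show "norm B * K / (norm B * K + 1) \<le> 1" by (simp add: divide_le_eq_1)
        qed (use e in auto)
        finally show ?thesis by (intro mult_left_mono) auto
      qed
      finally show "norm (sum (\<lambda>i. f' i x h) {..<n} - g' x h) \<le> e * norm h" by (simp add: mult.commute)
    qed
  qed
  obtain g where g: "\<forall>x\<in>S. (\<lambda>n. tm B n x) sums g x \<and> (g has_derivative g' x) (at x within S)"
    using has_derivative_series[OF convS(1) d1 d3 convS(3) summable_sums[OF tm_summable]] by blast
  have geq: "g x = mat_exp (x *\<^sub>R B)" if "x \<in> S" for x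
    using g that sums_unique mat_exp_tm by metis
  have "(g has_derivative g' t) (at t)"
    using g convS at_within_open by metis
  then have "((\<lambda>s. mat_exp (s *\<^sub>R B)) has_derivative g' t) (at t)"
    by (rule has_derivative_transform_within_open[OF _ convS(2) convS(3)]) (use geq in auto)
  then show ?thesis unfolding has_vector_derivative_def g'_def .
qed




lemma matrix_inv_props:
  assumes "invertible (A::'a::semiring_1^'n^'m)"
  shows "A ** matrix_inv A = mat 1" "matrix_inv A ** A = mat 1"
  using someI_ex[OF assms[unfolded invertible_def]] unfolding matrix_inv_def by auto

lemma tendsto_det:
  fixes f :: "'b \<Rightarrow> complex^'n^'n"
  assumes "(f \<longlongrightarrow> A) F"
  shows "((\<lambda>s. det (f s)) \<longlongrightarrow> det A) F"
  unfolding det_def by (intro tendsto_intros assms)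

lemma mv_axis: "((M::complex^'n^'n) *v axis j 1) $ k = M $ k $ j"
  by (simp add: matrix_vector_mult_def axis_def if_distrib cong: if_cong)

lemma matrix_inv_entry:
  fixes A :: "complex^'n^'n"
  assumes "det A \<noteq> 0"
  shows "matrix_inv A $ k $ j = det (\<chi> i l. if l = k then axis j 1 $ i else A $ i $ l) / det A"
proof -
  have inv: "invertible A" using assms invertible_det_nz by blast
  have x: "A *v (matrix_inv A *v axis j 1) = axis j 1"
    by (simp only: matrix_vector_mul_assoc matrix_inv_props(1)[OF inv] matrix_vector_mul_lid)
  have "matrix_inv A *v axis j 1 = (\<chi> k. det(\<chi> i l. if l = k then axis j 1 $ i else A $ i $ l) / det A)"
    using cramer[OF assms, THEN iffD1, OF x] .
  then have "(matrix_inv A *v axis j 1) $ k = det(\<chi> i l. if l = k then axis j 1 $ i else A $ i $ l) / det A"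
    by simp
  then show ?thesis by (simp only: mv_axis)
qed

lemma tendsto_repl:
  fixes f :: "'b \<Rightarrow> complex^'n^'n"
  assumes f: "(f \<longlongrightarrow> A) F"
  shows "((\<lambda>s. (\<chi> i l. if l = k then b $ i else f s $ i $ l)::complex^'n^'n) \<longlongrightarrow> (\<chi> i l. if l = k then b $ i else A $ i $ l)) F"
proof (rule vec_tendstoI, rule vec_tendstoI)
  fix i l
  show "((\<lambda>s. (\<chi> i l. if l = k then b $ i else f s $ i $ l) $ i $ l) \<longlongrightarrow> (\<chi> i l. if l = k then b $ i else A $ i $ l) $ i $ l) F"
    using tendsto_vec_nth[OF tendsto_vec_nth[OF f]] by (cases "l = k") auto
qed

lemma tendsto_matrix_inv:
  fixes f :: "'b \<Rightarrow> complex^'n^'n"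
  assumes f: "(f \<longlongrightarrow> A) F" and inv: "invertible A"
  shows "((\<lambda>s. matrix_inv (f s)) \<longlongrightarrow> matrix_inv A) F"
proof -
  have dA: "det A \<noteq> 0" using inv invertible_det_nz by blast
  have ev: "\<forall>\<^sub>F s in F. det (f s) \<noteq> 0"
    using tendsto_imp_eventually_ne[OF tendsto_det[OF f] dA] .
  show ?thesis
  proof (rule vec_tendstoI, rule vec_tendstoI)
    fix k j
    have "((\<lambda>s. det (\<chi> i l. if l = k then axis j 1 $ i else f s $ i $ l) / det (f s)) \<longlongrightarrow>
          det (\<chi> i l. if l = k then axis j 1 $ i else A $ i $ l) / det A) F"
      by (rule tendsto_divide[OF tendsto_det[OF tendsto_repl[OF f]] tendsto_det[OF f] dA])
    then have "((\<lambda>s. det (\<chi> i l. if l = k then axis j 1 $ i else f s $ i $ l) / det (f s)) \<longlongrightarrow>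
          matrix_inv A $ k $ j) F"
      by (simp only: matrix_inv_entry[OF dA])
    moreover have "\<forall>\<^sub>F s in F. det (\<chi> i l. if l = k then axis j 1 $ i else f s $ i $ l) / det (f s) = matrix_inv (f s) $ k $ j"
      using ev by eventually_elim (rule matrix_inv_entry[symmetric])
    ultimately show "((\<lambda>s. matrix_inv (f s) $ k $ j) \<longlongrightarrow> matrix_inv A $ k $ j) F"
      by (rule Lim_transform_eventually)
  qed
qed



lemma cont_mult_vanishing_deriv:
  fixes g :: "real \<Rightarrow> complex^'n^'m" and f :: "real \<Rightarrow> complex^'p^'n"
  assumes g: "(g \<longlongrightarrow> g t) (at t)" and f: "(f has_vector_derivative f') (at t)" and f0: "f t = 0"
  shows "((\<lambda>s. g s ** f s) has_vector_derivative (g t ** f')) (at t)"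
proof -
  interpret bb: bounded_bilinear "(**) :: complex^'n^'m \<Rightarrow> complex^'p^'n \<Rightarrow> complex^'p^'m"
    by (rule mm_bounded_bilinear)
  have fd: "((\<lambda>y. (1 / norm (y - t)) *\<^sub>R (f y - (f t + (y - t) *\<^sub>R f'))) \<longlongrightarrow> 0) (at t)"
    using f unfolding has_vector_derivative_def has_derivative_within[of f _ t UNIV] by simp
  have t1: "((\<lambda>y. g y ** ((1 / norm (y - t)) *\<^sub>R (f y - (f t + (y - t) *\<^sub>R f')))) \<longlongrightarrow> g t ** 0) (at t)"
    by (rule bb.tendsto[OF g fd])
  have z: "Zfun (\<lambda>y. g y - g t) (at t)" using g by (simp add: tendsto_Zfun_iff)
  have b: "Bfun (\<lambda>y. ((y - t) / \<bar>y - t\<bar>) *\<^sub>R f') (at t)"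
  proof (rule BfunI, rule always_eventually, rule allI)
    fix y
    have "\<bar>(y - t) / \<bar>y - t\<bar>\<bar> \<le> 1" by (cases "y = t") auto
    then show "norm (((y - t) / \<bar>y - t\<bar>) *\<^sub>R f') \<le> norm f'"
      by (simp add: mult_left_le_one_le)
  qed
  have t2: "((\<lambda>y. (g y - g t) ** (((y - t) / \<bar>y - t\<bar>) *\<^sub>R f')) \<longlongrightarrow> 0) (at t)"
    using bb.Zfun_prod_Bfun[OF z b] by (simp add: tendsto_Zfun_iff)
  have sum: "((\<lambda>y. g y ** ((1 / norm (y - t)) *\<^sub>R (f y - (f t + (y - t) *\<^sub>R f'))) +
      (g y - g t) ** (((y - t) / \<bar>y - t\<bar>) *\<^sub>R f')) \<longlongrightarrow> 0) (at t)"
    using tendsto_add[OF t1 t2] by simp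
  have eq: "g y ** ((1 / norm (y - t)) *\<^sub>R (f y - (f t + (y - t) *\<^sub>R f'))) +
      (g y - g t) ** (((y - t) / \<bar>y - t\<bar>) *\<^sub>R f') =
      (1 / norm (y - t)) *\<^sub>R (g y ** f y - (g t ** f t + (y - t) *\<^sub>R (g t ** f')))" for y
  proof -
    have aux: "(t / a) *\<^sub>R X + ((y - t) / a) *\<^sub>R X = (y / a) *\<^sub>R X" for a and X :: "complex^'p^'m"
    proof -
      have "(t / a) *\<^sub>R X + ((y - t) / a) *\<^sub>R X = (t / a + (y - t) / a) *\<^sub>R X"
        by (rule scaleR_add_left[symmetric])
      also have "t / a + (y - t) / a = y / a" by (simp add: add_divide_distrib[symmetric])
      finally show ?thesis .
    qed
    have "g y ** ((1 / norm (y - t)) *\<^sub>R (f y - (f t + (y - t) *\<^sub>R f'))) +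
      (g y - g t) ** (((y - t) / \<bar>y - t\<bar>) *\<^sub>R f') =
      (1 / \<bar>y - t\<bar>) *\<^sub>R (g y ** f y) - ((y - t) / \<bar>y - t\<bar>) *\<^sub>R (g t ** f')"
      by (simp add: f0 bb.scaleR_right bb.diff_right bb.diff_left bb.add_right bb.add_left algebra_simps) (rule aux)
    also have "\<dots> = (1 / norm (y - t)) *\<^sub>R (g y ** f y - (g t ** f t + (y - t) *\<^sub>R (g t ** f')))"
      by (simp add: f0 algebra_simps) (rule aux[symmetric])
    finally show ?thesis .
  qed
  show ?thesis
    unfolding has_vector_derivative_def has_derivative_within[of _ _ t UNIV]
    using sum unfolding eq
    by (simp add: bounded_linear_scaleR_left)
qed

lemma matrix_inv_has_vector_derivative:
  fixes Af :: "real \<Rightarrow> complex^'n^'n"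
  assumes A: "(Af has_vector_derivative A') (at t)" and inv: "invertible (Af t)"
  shows "((\<lambda>s. matrix_inv (Af s)) has_vector_derivative
           - (matrix_inv (Af t) ** A' ** matrix_inv (Af t))) (at t)"
proof -
  define G0 where "G0 = matrix_inv (Af t)"
  have cA: "(Af \<longlongrightarrow> Af t) (at t)"
    using has_vector_derivative_continuous[OF A] by (simp add: continuous_at)
  have cG: "((\<lambda>s. matrix_inv (Af s)) \<longlongrightarrow> G0) (at t)"
    unfolding G0_def by (rule tendsto_matrix_inv[OF cA inv])
  have dA: "det (Af t) \<noteq> 0" using inv invertible_det_nz by blast
  have cdet: "isCont (\<lambda>s. det (Af s)) t"
    unfolding isCont_def by (rule tendsto_det[OF cA])
  have evn: "\<forall>\<^sub>F s in nhds t. det (Af s) \<noteq> 0"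
    unfolding eventually_nhds_conv_at
    using tendsto_imp_eventually_ne[OF cdet[unfolded isCont_def] dA] dA by simp
  define H where "H = (\<lambda>s. G0 - (matrix_inv (Af s) ** (Af s - Af t)) ** G0)"
  have Heq: "matrix_inv (Af s) = H s" if "det (Af s) \<noteq> 0" for s
  proof -
    have isv: "invertible (Af s)" using that invertible_det_nz by blast
    have "(matrix_inv (Af s) ** (Af s - Af t)) ** G0 = G0 - matrix_inv (Af s)"
      by (simp add: mm_diff_ldistrib mm_diff_rdistrib matrix_inv_props[OF isv] matrix_inv_props[OF inv]
           G0_def flip: matrix_mul_assoc)
    then show ?thesis unfolding H_def by simp
  qed
  have gH: "(H has_vector_derivative - (G0 ** A' ** G0)) (at t)"
  proof -
    have f: "((\<lambda>s. Af s - Af t) has_vector_derivative A') (at t)"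
      using has_vector_derivative_diff[OF A has_vector_derivative_const] by simp
    have p: "((\<lambda>s. matrix_inv (Af s) ** (Af s - Af t)) has_vector_derivative (G0 ** A')) (at t)"
      using cont_mult_vanishing_deriv[OF _ f] cG unfolding G0_def by simp
    have "((\<lambda>s. (matrix_inv (Af s) ** (Af s - Af t)) ** G0) has_vector_derivative (G0 ** A' ** G0)) (at t)"
      using bounded_linear.has_vector_derivative[OF bounded_bilinear.bounded_linear_left[OF mm_bounded_bilinear] p] .
    then show ?thesis unfolding H_def
      using has_vector_derivative_diff[OF has_vector_derivative_const] by fastforce
  qed
  have "((\<lambda>s. matrix_inv (Af s)) has_vector_derivative - (G0 ** A' ** G0)) (at t) \<longleftrightarrow>
        (H has_vector_derivative - (G0 ** A' ** G0)) (at t)"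
    by (rule has_vector_derivative_cong_ev) (use evn dA Heq in \<open>auto elim!: eventually_mono\<close>)
  then show ?thesis using gH G0_def by simp
qed



lemma mm_ctx2: "A ** B = D \<Longrightarrow> (Z::complex^'n^'k) ** A ** B = Z ** D"
  by (metis matrix_mul_assoc)

lemma mm_ctx3: "A ** B ** C = D \<Longrightarrow> (Z::complex^'n^'k) ** A ** B ** C = Z ** D"
  by (metis matrix_mul_assoc)

lemmas nf = matrix_mul_assoc matrix_add_ldistrib mm_add_rdistrib mm_diff_ldistrib mm_diff_rdistrib
  mm_neg_left mm_neg_right matrix_mul_lid matrix_mul_rid

lemma alg_identity:
  fixes S Si M G Gp Gm :: "complex^'n^'n" and P :: "complex^'m^'n" and U :: "complex^'n^'m"
  assumes h1: "S ** Si = mat 1" and h2: "Si ** S = mat 1"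
    and syl: "Si ** M - M ** S = P ** U"
    and g1: "G ** (mat 1 + M ** M) = mat 1" and g2: "(mat 1 + M ** M) ** G = mat 1"
    and gp: "Gp ** (mat 1 + (S ** M) ** (S ** M)) = mat 1"
    and gm: "(mat 1 + (Si ** M) ** (Si ** M)) ** Gm = mat 1"
  shows "U ** G ** (S - Si) ** P - U ** G ** (M ** (S - Si) ** M + (S - Si) ** M ** M) ** G ** P =
    (U ** Gp ** (S ** P)) ** (mat 1 + (U ** G ** P) ** (U ** G ** P))
    - (mat 1 + (U ** G ** P) ** (U ** G ** P)) ** (U ** Gm ** (Si ** P))"
proof -
  have PU: "P ** U = Si ** M - M ** S" using syl by simp
  have MA: "M ** (mat 1 + M ** M) = (mat 1 + M ** M) ** M"
    by (simp add: nf)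
  have MG: "M ** G = G ** M"
  proof -
    have "G ** M = G ** M ** ((mat 1 + M ** M) ** G)" by (simp add: g2)
    also have "\<dots> = G ** (M ** (mat 1 + M ** M)) ** G" by (simp add: matrix_mul_assoc)
    also have "\<dots> = (G ** (mat 1 + M ** M)) ** M ** G" by (simp add: MA matrix_mul_assoc)
    also have "\<dots> = M ** G" by (simp add: g1)
    finally show ?thesis by simp
  qed
  have GMM: "G ** M ** M = mat 1 - G"
  proof -
    have "G + G ** M ** M = mat 1" using g1 by (simp add: nf)
    then show ?thesis by (simp add: algebra_simps)
  qed
  note rel = h1 h2 mm_ctx2[OF h1] mm_ctx2[OF h2] PU mm_ctx2[OF PU] MG mm_ctx2[OF MG] GMM mm_ctx3[OF GMM]
  define a where "a = U ** G ** S ** P"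
  define b where "b = U ** M ** G ** S ** P"
  define c where "c = U ** Si ** M ** G ** P"
  define vp where "vp = U ** Gp ** (S ** P)"
  define vm where "vm = U ** Gm ** (Si ** P)"
  define Q where "Q = mat 1 + (U ** G ** P) ** (U ** G ** P)"
  have qf: "Q = (mat 1 - b) ** (mat 1 + c)"
    unfolding Q_def b_def c_def by (simp add: nf rel algebra_simps)
  have Ap: "(S ** M) ** (S ** M) = M ** M - S ** P ** U ** M"
    by (simp add: nf rel)
  have GpA: "Gp ** (mat 1 + M ** M) = mat 1 + Gp ** S ** P ** U ** M"
  proof -
    have "Gp ** (mat 1 + (M ** M - S ** P ** U ** M)) = mat 1" using gp Ap by simp
    then show ?thesis by (simp add: nf algebra_simps)
  qed
  have eqGp: "Gp = G + Gp ** S ** P ** U ** M ** G"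
  proof -
    have "Gp = Gp ** ((mat 1 + M ** M) ** G)" by (simp add: g2)
    also have "\<dots> = (Gp ** (mat 1 + M ** M)) ** G" by (simp add: matrix_mul_assoc)
    also have "\<dots> = G + Gp ** S ** P ** U ** M ** G" by (simp only: GpA) (simp add: nf)
    finally show ?thesis .
  qed
  have st2: "vp ** (mat 1 - b) = a"
  proof -
    have "vp = U ** (G + Gp ** S ** P ** U ** M ** G) ** (S ** P)"
      unfolding vp_def by (rule arg_cong[where f="\<lambda>X. U ** X ** (S ** P)", OF eqGp])
    also have "\<dots> = a + vp ** b" by (simp add: nf a_def b_def vp_def)
    finally show ?thesis by (simp add: nf algebra_simps)
  qed
  have C: "Si ** G ** S ** (mat 1 + (Si ** M) ** (Si ** M)) = mat 1 + Si ** M ** G ** P ** U"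
    by (simp add: nf rel algebra_simps)
  have C2: "Si ** G ** S = (mat 1 + Si ** M ** G ** P ** U) ** Gm"
  proof -
    have "Si ** G ** S = Si ** G ** S ** ((mat 1 + (Si ** M) ** (Si ** M)) ** Gm)" by (simp add: gm)
    also have "\<dots> = (Si ** G ** S ** (mat 1 + (Si ** M) ** (Si ** M))) ** Gm" by (rule matrix_mul_assoc)
    also have "\<dots> = (mat 1 + Si ** M ** G ** P ** U) ** Gm" by (simp only: C)
    finally show ?thesis .
  qed
  have C3: "Si ** G = (mat 1 + Si ** M ** G ** P ** U) ** Gm ** Si"
  proof -
    have "Si ** G = Si ** G ** S ** Si" by (simp add: h1 flip: matrix_mul_assoc)
    then show ?thesis by (simp add: C2)
  qed
  have st4: "(mat 1 + c) ** vm = U ** Si ** G ** P"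
  proof -
    have "U ** Si ** G ** P = U ** ((mat 1 + Si ** M ** G ** P ** U) ** Gm ** Si) ** P"
      using arg_cong[where f="\<lambda>X. U ** X ** P", OF C3] by (simp add: matrix_mul_assoc)
    also have "\<dots> = (mat 1 + c) ** vm" by (simp add: nf c_def vm_def)
    finally show ?thesis by simp
  qed
  have rhs: "vp ** Q - Q ** vm = a ** (mat 1 + c) - (mat 1 - b) ** (U ** Si ** G ** P)"
  proof -
    have "vp ** Q = (vp ** (mat 1 - b)) ** (mat 1 + c)" by (simp add: qf matrix_mul_assoc)
    moreover have "Q ** vm = (mat 1 - b) ** ((mat 1 + c) ** vm)" by (simp add: qf matrix_mul_assoc)
    ultimately show ?thesis by (simp add: st2 st4)
  qed
  have fin: "U ** G ** (S - Si) ** P - U ** G ** (M ** (S - Si) ** M + (S - Si) ** M ** M) ** G ** P =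
     a ** (mat 1 + c) - (mat 1 - b) ** (U ** Si ** G ** P)"
    unfolding a_def b_def c_def by (simp add: nf rel algebra_simps)
  show ?thesis using fin rhs unfolding vp_def vm_def Q_def by simp
qed



lemma mat_pow_commute:
  assumes "C ** B = B ** (C::complex^'n^'n)"
  shows "C ** mat_pow B k = mat_pow B k ** C"
proof (induction k)
  case (Suc k)
  have "C ** mat_pow B (Suc k) = (C ** B) ** mat_pow B k" by (simp add: matrix_mul_assoc)
  also have "\<dots> = B ** (C ** mat_pow B k)" by (simp only: assms matrix_mul_assoc)
  also have "\<dots> = mat_pow B (Suc k) ** C" by (simp only: Suc matrix_mul_assoc mat_pow.simps)
  finally show ?case .
qed simp

lemma zpow_commute:
  assumes "C ** S = S ** (C::complex^'n^'n)" "C ** matrix_inv S = matrix_inv S ** C"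
  shows "C ** mat_zpow S y = mat_zpow S y ** C"
  unfolding mat_zpow_def using assms by (simp add: mat_pow_commute)

lemma zpow_succ:
  assumes inv: "invertible (S::complex^'n^'n)"
  shows "mat_zpow S (y + 1) = S ** mat_zpow S y"
proof (cases "0 \<le> y")
  case True
  then have "nat (y + 1) = Suc (nat y)" by simp
  then show ?thesis using True by (simp add: mat_zpow_def)
next
  case False
  define k where "k = nat (- y) - 1"
  have k: "nat (- y) = Suc k" using False by (simp add: k_def)
  have e1: "mat_zpow S y = matrix_inv S ** mat_pow (matrix_inv S) k"
    using False k by (simp add: mat_zpow_def)
  have e2: "mat_zpow S (y + 1) = mat_pow (matrix_inv S) k"
  proof (cases "y = -1")
    case True
    then have "k = 0" using k by simp
    then show ?thesis using True by (simp add: mat_zpow_def)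
  next
    case f: False
    then have "\<not> 0 \<le> y + 1" using False by simp
    moreover have "nat (- (y + 1)) = k" using k by simp
    ultimately show ?thesis by (simp add: mat_zpow_def)
  qed
  show ?thesis
    by (simp add: e1 e2 matrix_mul_assoc matrix_inv_props(1)[OF inv])
qed

lemma zpow_pred:
  assumes inv: "invertible (S::complex^'n^'n)"
  shows "mat_zpow S (y - 1) = matrix_inv S ** mat_zpow S y"
proof -
  have "mat_zpow S y = S ** mat_zpow S (y - 1)" using zpow_succ[OF inv, of "y - 1"] by simp
  then show ?thesis by (simp add: matrix_mul_assoc matrix_inv_props(2)[OF inv])
qed



theorem mainTheorem16:
  fixes S K :: "complex^'n^'n" and U :: "complex^'n^'m" and V :: "complex^'m^'n"
    and x :: int and t :: real
  assumes "invertible S"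
    and "matrix_inv S ** K - K ** S = V ** U"
    and "\<And>y. y \<in> {x - 1, x, x + 1} \<Longrightarrow>
           invertible (mat 1 + (Xi S y t ** K) ** (Xi S y t ** K))"
  shows "((\<lambda>s. calV S U V K x s) has_vector_derivative
           - (calV S U V K (x + 1) t ** (mat 1 + calV S U V K x t ** calV S U V K x t)
              - (mat 1 + calV S U V K x t ** calV S U V K x t) ** calV S U V K (x - 1) t))
         (at t)"
proof -
  note invS = assms(1) and sylK = assms(2) and invA = assms(3)
  define Si where "Si = matrix_inv S"
  have h1: "S ** Si = mat 1" and h2: "Si ** S = mat 1"
    using matrix_inv_props[OF invS] unfolding Si_def by auto
  define T where "T = S - Si"
  have TS: "S ** T = T ** S" unfolding T_def by (simp add: nf h1 h2)
  have TSi: "Si ** T = T ** Si" unfolding T_def by (simp add: nf h1 h2)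
  define E where "E = (\<lambda>s::real. mat_exp ((- s) *\<^sub>R T))"
  have XiE: "Xi S y s = mat_zpow S y ** E s" for y s
    unfolding Xi_def E_def T_def Si_def ..
  have ES: "S ** E s = E s ** S" for s
    unfolding E_def by (rule mat_exp_commute[OF TS])
  have ESi: "Si ** E s = E s ** Si" for s
    unfolding E_def by (rule mat_exp_commute[OF TSi])
  define Z where "Z = mat_zpow S x"
  have ZS: "S ** Z = Z ** S" unfolding Z_def
    by (rule zpow_commute) (simp_all add: matrix_mul_assoc h1 h2 flip: Si_def)
  have ZSi: "Si ** Z = Z ** Si" unfolding Z_def Si_def
    by (rule zpow_commute) (simp_all add: matrix_mul_assoc h1 h2 flip: Si_def)
  define Xs where "Xs = (\<lambda>s. Z ** E s)"
  define X where "X = Xs t"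
  have XS: "X ** S = S ** X" unfolding X_def Xs_def
    by (metis ES ZS matrix_mul_assoc)
  have XSi: "X ** Si = Si ** X" unfolding X_def Xs_def
    by (metis ESi ZSi matrix_mul_assoc)
  have XT: "T ** X = X ** T" unfolding T_def by (simp add: nf XS XSi)
  have dE: "(E has_vector_derivative ((- T) ** E t)) (at t)"
  proof -
    have "E = (\<lambda>s. mat_exp (s *\<^sub>R (- T)))" unfolding E_def by (simp add: fun_eq_iff)
    then show ?thesis using mat_exp_has_vector_derivative[of "- T" t] by simp
  qed
  have dX: "(Xs has_vector_derivative (- (T ** X))) (at t)"
  proof -
    have "(Xs has_vector_derivative (Z ** ((- T) ** E t))) (at t)"
      unfolding Xs_def
      by (rule bounded_linear.has_vector_derivative[OF bounded_bilinear.bounded_linear_right[OF mm_bounded_bilinear] dE])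
    moreover have "Z ** ((- T) ** E t) = - (T ** X)"
    proof -
      have ZT: "Z ** T = T ** Z" unfolding T_def using ZS ZSi by (simp add: nf)
      show ?thesis unfolding X_def Xs_def by (simp add: mm_neg_left mm_neg_right matrix_mul_assoc ZT)
    qed
    ultimately show ?thesis by simp
  qed
  define A where "A = (\<lambda>s. mat 1 + (Xs s ** K) ** (Xs s ** K))"
  define M where "M = X ** K"
  define P where "P = X ** V"
  define A' where "A' = M ** ((- (T ** X)) ** K) + ((- (T ** X)) ** K) ** M"
  have dXK: "((\<lambda>s. Xs s ** K) has_vector_derivative ((- (T ** X)) ** K)) (at t)"
    by (rule bounded_linear.has_vector_derivative[OF bounded_bilinear.bounded_linear_left[OF mm_bounded_bilinear] dX])
  have dA: "(A has_vector_derivative A') (at t)"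
  proof -
    have "((\<lambda>s. (Xs s ** K) ** (Xs s ** K)) has_vector_derivative A') (at t)"
      using bounded_bilinear.has_vector_derivative[OF mm_bounded_bilinear dXK dXK]
      unfolding A'_def M_def X_def by simp
    then show ?thesis unfolding A_def
      using has_vector_derivative_add[OF has_vector_derivative_const] by fastforce
  qed
  have invAt: "invertible (A t)"
    using invA[of x] unfolding A_def Xs_def X_def XiE Z_def by simp
  define G where "G = matrix_inv (A t)"
  have dG: "((\<lambda>s. matrix_inv (A s)) has_vector_derivative - (G ** A' ** G)) (at t)"
    unfolding G_def by (rule matrix_inv_has_vector_derivative[OF dA invAt])
  have dUG: "((\<lambda>s. U ** matrix_inv (A s)) has_vector_derivative U ** (- (G ** A' ** G))) (at t)"
    by (rule bounded_linear.has_vector_derivative[OF bounded_bilinear.bounded_linear_right[OF mm_bounded_bilinear] dG])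
  have dUGX: "((\<lambda>s. U ** matrix_inv (A s) ** Xs s) has_vector_derivative
      (U ** G) ** (- (T ** X)) + (U ** (- (G ** A' ** G))) ** X) (at t)"
    using bounded_bilinear.has_vector_derivative[OF mm_bounded_bilinear dUG dX]
    unfolding G_def X_def by simp
  have dUGXV: "((\<lambda>s. U ** matrix_inv (A s) ** Xs s ** V) has_vector_derivative
      ((U ** G) ** (- (T ** X)) + (U ** (- (G ** A' ** G))) ** X) ** V) (at t)"
    by (rule bounded_linear.has_vector_derivative[OF bounded_bilinear.bounded_linear_left[OF mm_bounded_bilinear] dUGX])
  have calVeq: "(\<lambda>s. calV S U V K x s) = (\<lambda>s. - (U ** matrix_inv (A s) ** Xs s ** V))"
    unfolding calV_def A_def Xs_def XiE Z_def by simp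
  have dcal: "((\<lambda>s. calV S U V K x s) has_vector_derivative
      - (((U ** G) ** (- (T ** X)) + (U ** (- (G ** A' ** G))) ** X) ** V)) (at t)"
    unfolding calVeq by (rule has_vector_derivative_minus[OF dUGXV])
  define Gp where "Gp = matrix_inv (mat 1 + (S ** M) ** (S ** M))"
  define Gm where "Gm = matrix_inv (mat 1 + (Si ** M) ** (Si ** M))"
  have Xp: "Xi S (x + 1) t = S ** X"
    unfolding XiE zpow_succ[OF invS] X_def Xs_def Z_def by (simp add: matrix_mul_assoc)
  have Xm: "Xi S (x - 1) t = Si ** X"
    unfolding XiE zpow_pred[OF invS] X_def Xs_def Z_def Si_def by (simp add: matrix_mul_assoc)
  have invp: "invertible (mat 1 + (S ** M) ** (S ** M))"
    using invA[of "x + 1"] unfolding Xp M_def by (simp add: matrix_mul_assoc)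
  have invm: "invertible (mat 1 + (Si ** M) ** (Si ** M))"
    using invA[of "x - 1"] unfolding Xm M_def by (simp add: matrix_mul_assoc)
  have A_t: "A t = mat 1 + M ** M" unfolding A_def M_def X_def ..
  have g1: "G ** (mat 1 + M ** M) = mat 1" and g2: "(mat 1 + M ** M) ** G = mat 1"
    using matrix_inv_props[OF invAt] unfolding G_def A_t by auto
  have gp: "Gp ** (mat 1 + (S ** M) ** (S ** M)) = mat 1"
    using matrix_inv_props[OF invp] unfolding Gp_def by auto
  have gm: "(mat 1 + (Si ** M) ** (Si ** M)) ** Gm = mat 1"
    using matrix_inv_props[OF invm] unfolding Gm_def by auto
  have syl: "Si ** M - M ** S = P ** U"
  proof -
    have "Si ** M - M ** S = X ** (Si ** K - K ** S)"
      unfolding M_def by (simp add: nf XSi)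
    also have "\<dots> = P ** U" using sylK unfolding Si_def P_def by (simp add: matrix_mul_assoc)
    finally show ?thesis .
  qed
  have alg: "U ** G ** (S - Si) ** P - U ** G ** (M ** (S - Si) ** M + (S - Si) ** M ** M) ** G ** P =
    (U ** Gp ** (S ** P)) ** (mat 1 + (U ** G ** P) ** (U ** G ** P))
    - (mat 1 + (U ** G ** P) ** (U ** G ** P)) ** (U ** Gm ** (Si ** P))"
    by (rule alg_identity[OF h1 h2 syl g1 g2 gp gm])
  have cx: "calV S U V K x t = - (U ** G ** P)"
    unfolding calV_def G_def A_t P_def M_def XiE by (simp add: X_def Xs_def Z_def matrix_mul_assoc)
  have cp: "calV S U V K (x + 1) t = - (U ** Gp ** (S ** P))"
    unfolding calV_def Xp Gp_def P_def M_def by (simp add: matrix_mul_assoc)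
  have cm: "calV S U V K (x - 1) t = - (U ** Gm ** (Si ** P))"
    unfolding calV_def Xm Gm_def P_def M_def Si_def by (simp add: matrix_mul_assoc)
  have lhs: "- (((U ** G) ** (- (T ** X)) + (U ** (- (G ** A' ** G))) ** X) ** V) =
     U ** G ** (S - Si) ** P - U ** G ** (M ** (S - Si) ** M + (S - Si) ** M ** M) ** G ** P"
    unfolding A'_def M_def P_def T_def[symmetric] by (simp add: nf)
  show ?thesis
    using dcal unfolding lhs alg cx cp cm by (simp add: mm_neg_left mm_neg_right)
qed

end
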